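(* In the setting below, fix $w^0\in W$ and define $\Phi(w)=-\int_{w^0}^{w}\sum_{i=1}^nB_i\,dw_i$ for $w\in W$ (the integral is independent of the path in $W$ since the 1-form $\sum_i B_i\,dw_i$ is closed and $W$ is convex). Then $\Phi$ is a strictly convex function on $W$.
   Context: Setting: $T^*$ is a triangulation of a closed surface $S$ with vertex set $T^0$; $\Sigma=S\setminus N(T^0)$ where $N(T^0)$ is a small open regular disjoint neighborhood of $T^0$; $\Sigma$ has boundary components labeled $1,\dots,n$. $T=T^*\cap\Sigma$ is the ideal triangulation with ideal edges $E$ and ideal faces $F$; $ij$ denotes the ideal edge between boundary components $i,j$ and $ijk$ the ideal face adjacent to boundary components $i,j,k$. $\theta_i^f$ is the length of the side of the right-angled hyperbolic hexagon of face $f=ijk$ (pairwise non-adjacent sides of lengths $l_{ij},l_{jk},l_{ki}$) opposite to the side of length $l_{jk}$, i.e. $\cosh\theta_i^f=\frac{\cosh l_{jk}+\cosh l_{ki}\cosh l_{ij}}{\sinh l_{ki}\sinh l_{ij}}$. Fix $l^0\in\mathbb{R}_+^{|E|}$. $W=\{w\in\mathbb{R}^n: w_i+w_j>-\ln\cosh\frac{l^0_{ij}}{2}\ \forall ij\in E\}$; for $w\in W$, $\cosh\frac{l_{ij}}{2}=e^{w_i+w_j}\cosh\frac{l^0_{ij}}{2}$, and $B_i(w)=\sum_{f\in F_i}\theta_i^f$, where $F_i$ is the set of faces adjacent to boundary component $i$. *)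

theory Defs
  imports "HOL-Analysis.Analysis"
begin

definition strictly_convex_on :: "'a::real_vector set \<Rightarrow> ('a \<Rightarrow> real) \<Rightarrow> bool" where
  "strictly_convex_on S f \<longleftrightarrow>
     (\<forall>x\<in>S. \<forall>y\<in>S. \<forall>t. x \<noteq> y \<longrightarrow> 0 < t \<longrightarrow> t < 1 \<longrightarrow>
        f ((1 - t) *\<^sub>R x + t *\<^sub>R y) < (1 - t) * f x + t * f y)"

(* Combinatorial data of the ideal triangulation T of Sigma:
   boundary components = elements of the finite type 'v (i.e. 1..n);
   ideal edges E (edge e joins boundary components ea e and eb e, possibly equal);
   ideal faces F.  Face f has sides  side f k  (k = 0,1,2) and corners
   corner f k ; corner k is the boundary component opposite to side k, and
   side k joins corners k+1 and k+2 (mod 3). *)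
definition ideal_triangulation ::
  "'e set \<Rightarrow> 'f set \<Rightarrow> ('e \<Rightarrow> 'v) \<Rightarrow> ('e \<Rightarrow> 'v) \<Rightarrow> ('f \<Rightarrow> nat \<Rightarrow> 'e) \<Rightarrow> ('f \<Rightarrow> nat \<Rightarrow> 'v) \<Rightarrow> bool" where
  "ideal_triangulation E F ea eb side corner \<longleftrightarrow>
     finite E \<and> finite F \<and>
     (\<forall>f\<in>F. \<forall>k<3. side f k \<in> E \<and>
         {ea (side f k), eb (side f k)} = {corner f ((k + 1) mod 3), corner f ((k + 2) mod 3)}) \<and>
     (\<forall>e\<in>E. card {(f, k). f \<in> F \<and> k < 3 \<and> side f k = e} = 2) \<and>
     (\<forall>i. \<exists>f\<in>F. \<exists>k<3. corner f k = i)"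

definition Wdom :: "'e set \<Rightarrow> ('e \<Rightarrow> 'v) \<Rightarrow> ('e \<Rightarrow> 'v) \<Rightarrow> ('e \<Rightarrow> real) \<Rightarrow> (real^'v::finite) set" where
  "Wdom E ea eb l0 = {w. \<forall>e\<in>E. w $ ea e + w $ eb e > - ln (cosh (l0 e / 2))}"

definition edge_len :: "('e \<Rightarrow> 'v) \<Rightarrow> ('e \<Rightarrow> 'v) \<Rightarrow> ('e \<Rightarrow> real) \<Rightarrow> real^'v::finite \<Rightarrow> 'e \<Rightarrow> real" where
  "edge_len ea eb l0 w e = 2 * arcosh (exp (w $ ea e + w $ eb e) * cosh (l0 e / 2))"

definition theta :: "('e \<Rightarrow> 'v) \<Rightarrow> ('e \<Rightarrow> 'v) \<Rightarrow> ('e \<Rightarrow> real) \<Rightarrow> ('f \<Rightarrow> nat \<Rightarrow> 'e)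
                       \<Rightarrow> real^'v::finite \<Rightarrow> 'f \<Rightarrow> nat \<Rightarrow> real" where
  "theta ea eb l0 side w f k =
     (let L = edge_len ea eb l0 w;
          a = L (side f k); b = L (side f ((k + 1) mod 3)); c = L (side f ((k + 2) mod 3))
      in arcosh ((cosh a + cosh b * cosh c) / (sinh b * sinh c)))"

definition Bsum :: "'f set \<Rightarrow> ('e \<Rightarrow> 'v) \<Rightarrow> ('e \<Rightarrow> 'v) \<Rightarrow> ('e \<Rightarrow> real) \<Rightarrow> ('f \<Rightarrow> nat \<Rightarrow> 'e)
                      \<Rightarrow> ('f \<Rightarrow> nat \<Rightarrow> 'v) \<Rightarrow> 'v \<Rightarrow> real^'v::finite \<Rightarrow> real" where
  "Bsum F ea eb l0 side corner i w =
     (\<Sum>f\<in>F. \<Sum>k\<in>{k. k < 3 \<and> corner f k = i}. theta ea eb l0 side w f k)"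

(* Phi(w) = - int_{w0}^{w} sum_i B_i dw_i, computed along the straight segment
   from w0 to w (W is convex and the form is closed). *)
definition Phi :: "'f set \<Rightarrow> ('e \<Rightarrow> 'v) \<Rightarrow> ('e \<Rightarrow> 'v) \<Rightarrow> ('e \<Rightarrow> real) \<Rightarrow> ('f \<Rightarrow> nat \<Rightarrow> 'e)
                      \<Rightarrow> ('f \<Rightarrow> nat \<Rightarrow> 'v) \<Rightarrow> real^'v::finite \<Rightarrow> real^'v \<Rightarrow> real" where
  "Phi F ea eb l0 side corner w0 w =
     - integral {0..1} (\<lambda>t. \<Sum>i\<in>UNIV.
          Bsum F ea eb l0 side corner i (w0 + t *\<^sub>R (w - w0)) * (w $ i - w0 $ i))"

end

theory Submission
  imports Defs
begin

definition Th :: "real \<Rightarrow> real \<Rightarrow> real \<Rightarrow> real" where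
  "Th a b c = arcosh ((a + b*c) / (sqrt (b^2-1) * sqrt (c^2-1)))"
definition Dl :: "real \<Rightarrow> real \<Rightarrow> real \<Rightarrow> real" where
  "Dl a b c = a^2+b^2+c^2+2*a*b*c - 1"
definition Tder :: "real \<Rightarrow> real \<Rightarrow> real \<Rightarrow> real \<Rightarrow> real \<Rightarrow> real \<Rightarrow> real" where
  "Tder a b c da db dc = (da - (c+a*b)/(b^2-1)*db - (b+a*c)/(c^2-1)*dc) / sqrt (Dl a b c)"

lemma Dl_pos: assumes "a>1" "b>1" "c>(1::real)" shows "Dl a b c > 0"
proof -
  have "a^2 > 1" using assms by (simp add: one_less_power)
  moreover have "a*b*c > 0" using assms by simp
  moreover have "b^2 > 0" "c^2>0" using assms by auto
  ultimately show ?thesis unfolding Dl_def by linarith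
qed

lemma sqrt_lt_self: assumes "b > (1::real)" shows "sqrt (b^2-1) < b"
proof -
  have "sqrt (b^2-1) < sqrt (b^2)" using assms by (intro real_sqrt_less_mono) auto
  then show ?thesis using assms by simp
qed

lemma Th_arg_gt1:
  assumes "a>1" "b>1" "c>(1::real)"
  shows "(a + b*c) / (sqrt (b^2-1) * sqrt (c^2-1)) > 1"
proof -
  have pb: "sqrt (b^2-1) > 0" "sqrt (c^2-1) > 0" using assms by (auto simp: one_less_power)
  have "sqrt (b^2-1) * sqrt (c^2-1) < b * c"
    using sqrt_lt_self[OF assms(2)] sqrt_lt_self[OF assms(3)] pb assms
    by (intro mult_strict_mono) auto
  then show ?thesis using pb assms by (simp add: field_simps)
qed

lemma Dl_alt: "Dl a b c = (a + b*c)^2 - (b^2-1)*(c^2-1)"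
  unfolding Dl_def by (simp add: power2_eq_square algebra_simps)

lemma Th_deriv:
  fixes a b c :: "real \<Rightarrow> real"
  assumes da: "(a has_real_derivative A) (at r)" and db: "(b has_real_derivative B) (at r)"
    and dc: "(c has_real_derivative C) (at r)"
    and a1: "a r > 1" and b1: "b r > 1" and c1: "c r > 1"
  shows "((\<lambda>r. Th (a r) (b r) (c r)) has_real_derivative Tder (a r) (b r) (c r) A B C) (at r)"
proof -
  define Sb where "Sb = sqrt (b r^2 - 1)"
  define Sc where "Sc = sqrt (c r^2 - 1)"
  define N where "N = a r + b r * c r"
  have b2: "b r^2 - 1 > 0" "c r^2 - 1 > 0" using b1 c1 by (auto simp: one_less_power)
  have Sbp: "Sb > 0" "Sc > 0" using b2 by (auto simp: Sb_def Sc_def)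
  have Sb2: "Sb^2 = b r^2 - 1" "Sc^2 = c r^2 - 1" using b2 by (auto simp: Sb_def Sc_def)
  have dSb: "((\<lambda>r. sqrt (b r^2 - 1)) has_real_derivative (b r * B / Sb)) (at r)"
    using b2 Sbp unfolding Sb_def
    by (auto intro!: derivative_eq_intros db simp: field_simps)
  have dSc: "((\<lambda>r. sqrt (c r^2 - 1)) has_real_derivative (c r * C / Sc)) (at r)"
    using b2 Sbp unfolding Sc_def
    by (auto intro!: derivative_eq_intros dc simp: field_simps)
  define Y where "Y = ((A + (B * c r + b r * C)) * (Sb*Sc) - N * (b r * B / Sb * Sc + Sb * (c r * C / Sc))) / ((Sb*Sc)*(Sb*Sc))"
  have dy: "((\<lambda>r. (a r + b r * c r) / (sqrt (b r^2 - 1) * sqrt (c r^2 - 1))) has_real_derivative Y) (at r)"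
  proof -
    have "((\<lambda>r. (a r + b r * c r) / (sqrt (b r^2 - 1) * sqrt (c r^2 - 1))) has_real_derivative
       ((A + (B * c r + b r * C)) * (sqrt (b r^2 - 1) * sqrt (c r^2 - 1)) - (a r + b r * c r) * (b r * B / Sb * sqrt (c r^2 - 1) + sqrt (b r^2 - 1) * (c r * C / Sc))) / ((sqrt (b r^2 - 1) * sqrt (c r^2 - 1))*(sqrt (b r^2 - 1) * sqrt (c r^2 - 1)))) (at r)"
      using DERIV_divide[OF DERIV_add[OF da DERIV_mult[OF db dc]] DERIV_mult[OF dSb dSc]] Sbp
      unfolding Sb_def Sc_def by (simp add: ac_simps)
    then show ?thesis unfolding Y_def Sb_def Sc_def N_def .
  qed
  have y1: "N / (Sb*Sc) > 1" using Th_arg_gt1[OF a1 b1 c1] by (simp add: N_def Sb_def Sc_def)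
  have D: "(N/(Sb*Sc))^2 - 1 = Dl (a r) (b r) (c r) / (Sb*Sc)^2"
  proof -
    have "(N/(Sb*Sc))^2 - 1 = (N^2 - Sb^2*Sc^2) / (Sb*Sc)^2"
      using Sbp by (simp add: field_simps power_mult_distrib)
    also have "N^2 - Sb^2*Sc^2 = Dl (a r) (b r) (c r)"
      unfolding Sb2 Dl_alt N_def by simp
    finally show ?thesis .
  qed
  have sqD: "sqrt ((N/(Sb*Sc))^2 - 1) = sqrt (Dl (a r) (b r) (c r)) / (Sb*Sc)"
    unfolding D using Sbp by (simp add: real_sqrt_divide)
  have Dp: "Dl (a r) (b r) (c r) > 0" using Dl_pos[OF a1 b1 c1] .
  have ch: "((\<lambda>r. Th (a r) (b r) (c r)) has_real_derivative (1 / sqrt ((N/(Sb*Sc))^2 - 1)) * Y) (at r)"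
    unfolding Th_def using DERIV_chain2[OF arcosh_real_has_field_derivative[OF Th_arg_gt1[OF a1 b1 c1]] dy]
    by (simp add: N_def Sb_def Sc_def)
  have "Sb*Sc*Y = A + B * c r + b r * C - N * b r * B / Sb^2 - N * c r * C / Sc^2"
    using Sbp unfolding Y_def by (simp add: field_simps power2_eq_square)
  also have "\<dots> = A - (c r + a r * b r)/(b r^2-1) * B - (b r + a r * c r)/(c r^2-1) * C"
    using b2 unfolding Sb2 N_def by (simp add: field_simps power2_eq_square)
  finally have e: "Sb*Sc*Y = A - (c r + a r * b r)/(b r^2-1) * B - (b r + a r * c r)/(c r^2-1) * C" .
  have "(1 / sqrt ((N/(Sb*Sc))^2 - 1)) * Y = Tder (a r) (b r) (c r) A B C"
    unfolding sqD Tder_def e[symmetric] using Sbp Dp by (simp add: field_simps)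
  with ch show ?thesis by simp
qed

definition ff :: "real \<Rightarrow> real \<Rightarrow> real \<Rightarrow> real \<Rightarrow> real \<Rightarrow> real \<Rightarrow> real \<Rightarrow> real \<Rightarrow> real \<Rightarrow> real" where
 "ff a0 a1 a2 d0 d1 d2 h0 h1 h2 =
   h0*((a0+1)*(d1+d2) - (a2+a0*a1)/(a1-1)*(d2+d0) - (a1+a0*a2)/(a2-1)*(d0+d1))
 + h1*((a1+1)*(d2+d0) - (a0+a1*a2)/(a2-1)*(d0+d1) - (a2+a1*a0)/(a0-1)*(d1+d2))
 + h2*((a2+1)*(d0+d1) - (a1+a2*a0)/(a0-1)*(d1+d2) - (a0+a2*a1)/(a1-1)*(d2+d0))"

definition Qf :: "real \<Rightarrow> real \<Rightarrow> real \<Rightarrow> real \<Rightarrow> real \<Rightarrow> real \<Rightarrow> real" where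
 "Qf a0 a1 a2 d0 d1 d2 =
    (a1+a2)*(d1+d2)^2/(a0-1) + (a2+a0)*(d2+d0)^2/(a1-1) + (a0+a1)*(d0+d1)^2/(a2-1)
  + 2*((a0-1)*d0^2 + (a1-1)*d1^2 + (a2-1)*d2^2) + (d0-d1)^2 + (d1-d2)^2 + (d2-d0)^2"

lemma ff_sym:
  assumes "a0 > 1" "a1 > 1" "a2 > (1::real)"
  shows "ff a0 a1 a2 d0 d1 d2 h0 h1 h2 = ff a0 a1 a2 h0 h1 h2 d0 d1 d2"
proof -
  have "a0 - 1 \<noteq> 0" "a1 - 1 \<noteq> 0" "a2 - 1 \<noteq> 0" using assms by auto
  then have "inverse (a0-1) * (a0-1) = 1" "inverse (a1-1) * (a1-1) = 1" "inverse (a2-1) * (a2-1) = 1" by auto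
  then show ?thesis unfolding ff_def divide_inverse by algebra
qed

lemma ff_Q:
  assumes "a0 > 1" "a1 > 1" "a2 > (1::real)"
  shows "ff a0 a1 a2 d0 d1 d2 d0 d1 d2 = - Qf a0 a1 a2 d0 d1 d2"
proof -
  have "a0 - 1 \<noteq> 0" "a1 - 1 \<noteq> 0" "a2 - 1 \<noteq> 0" using assms by auto
  then have "inverse (a0-1) * (a0-1) = 1" "inverse (a1-1) * (a1-1) = 1" "inverse (a2-1) * (a2-1) = 1" by auto
  then show ?thesis unfolding ff_def Qf_def divide_inverse by algebra
qed

lemma Qf_pos:
  assumes "a0 > 1" "a1 > 1" "a2 > (1::real)" "d0 \<noteq> 0 \<or> d1 \<noteq> 0 \<or> d2 \<noteq> 0"
  shows "Qf a0 a1 a2 d0 d1 d2 > 0"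
proof -
  have t: "(a1+a2)*(d1+d2)^2/(a0-1) \<ge> 0" "(a2+a0)*(d2+d0)^2/(a1-1) \<ge> 0" "(a0+a1)*(d0+d1)^2/(a2-1) \<ge> 0"
    using assms by auto
  have "(a0-1)*d0^2 + (a1-1)*d1^2 + (a2-1)*d2^2 > 0"
  proof -
    have "(a0-1)*d0^2 \<ge> 0" "(a1-1)*d1^2 \<ge> 0" "(a2-1)*d2^2 \<ge> 0" using assms by auto
    moreover have "(a0-1)*d0^2 > 0 \<or> (a1-1)*d1^2 > 0 \<or> (a2-1)*d2^2 > 0" using assms by auto
    ultimately show ?thesis by linarith
  qed
  moreover have "(d0-d1)^2 \<ge> 0" "(d1-d2)^2 \<ge> 0" "(d2-d0)^2 \<ge> 0" by auto
  ultimately show ?thesis using t unfolding Qf_def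
    by (smt (verit))
qed

definition FT :: "real \<Rightarrow> real \<Rightarrow> real \<Rightarrow> real \<Rightarrow> real \<Rightarrow> real \<Rightarrow> real \<Rightarrow> real \<Rightarrow> real \<Rightarrow> real" where
 "FT a0 a1 a2 d0 d1 d2 h0 h1 h2 =
    Tder a0 a1 a2 (2*(a0+1)*(d1+d2)) (2*(a1+1)*(d2+d0)) (2*(a2+1)*(d0+d1)) * h0
  + Tder a1 a2 a0 (2*(a1+1)*(d2+d0)) (2*(a2+1)*(d0+d1)) (2*(a0+1)*(d1+d2)) * h1
  + Tder a2 a0 a1 (2*(a2+1)*(d0+d1)) (2*(a0+1)*(d1+d2)) (2*(a1+1)*(d2+d0)) * h2"

lemma Tder_simp:
  assumes "b > 1" "c > (1::real)"
  shows "Tder a b c (2*(a+1)*x) (2*(b+1)*y) (2*(c+1)*z) =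
     2 * ((a+1)*x - (c+a*b)/(b-1)*y - (b+a*c)/(c-1)*z) / sqrt (Dl a b c)"
proof -
  have bs: "b^2 - 1 = (b-1)*(b+1)" "c^2 - 1 = (c-1)*(c+1)" by (simp_all add: power2_eq_square algebra_simps)
  have nz: "b - 1 \<noteq> 0" "b+1 \<noteq> 0" "c - 1 \<noteq> 0" "c+1 \<noteq> 0" using assms by auto
  have e1: "(c+a*b)/(b^2-1)*(2*(b+1)*y) = 2*((c+a*b)/(b-1)*y)"
    unfolding bs using nz by (simp add: divide_simps)
  have e2: "(b+a*c)/(c^2-1)*(2*(c+1)*z) = 2*((b+a*c)/(c-1)*z)"
    unfolding bs using nz by (simp add: divide_simps)
  show ?thesis unfolding Tder_def e1 e2 by (simp add: algebra_simps)
qed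

lemma Dl_rot: "Dl a1 a2 a0 = Dl a0 a1 a2" "Dl a2 a0 a1 = Dl a0 a1 a2"
  unfolding Dl_def by (simp_all add: algebra_simps)

lemma FT_eq:
  assumes "a0 > 1" "a1 > 1" "a2 > (1::real)"
  shows "FT a0 a1 a2 d0 d1 d2 h0 h1 h2 = 2 * ff a0 a1 a2 d0 d1 d2 h0 h1 h2 / sqrt (Dl a0 a1 a2)"
proof -
  have r: "Dl a1 a2 a0 = Dl a0 a1 a2" "Dl a2 a0 a1 = Dl a0 a1 a2" by (rule Dl_rot)+
  have "a0 - 1 \<noteq> 0" "a1 - 1 \<noteq> 0" "a2 - 1 \<noteq> 0" using assms by auto
  then show ?thesis
    unfolding FT_def Tder_simp[OF assms(2,3)] Tder_simp[OF assms(3,1)] Tder_simp[OF assms(1,2)] r ff_def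
    by (simp add: algebra_simps add_divide_distrib diff_divide_distrib)
qed

lemma FT_sym:
  assumes "a0 > 1" "a1 > 1" "a2 > (1::real)"
  shows "FT a0 a1 a2 d0 d1 d2 h0 h1 h2 = FT a0 a1 a2 h0 h1 h2 d0 d1 d2"
  by (simp only: FT_eq[OF assms] ff_sym[OF assms, of d0 d1 d2 h0 h1 h2])

lemma FT_neg:
  assumes "a0 > 1" "a1 > 1" "a2 > (1::real)"
  shows "FT a0 a1 a2 d0 d1 d2 d0 d1 d2 \<le> 0"
    and "d0 \<noteq> 0 \<or> d1 \<noteq> 0 \<or> d2 \<noteq> 0 \<Longrightarrow> FT a0 a1 a2 d0 d1 d2 d0 d1 d2 < 0"
proof -
  have D: "sqrt (Dl a0 a1 a2) > 0" using Dl_pos[OF assms] by simp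
  have "Qf a0 a1 a2 d0 d1 d2 \<ge> 0"
  proof (cases "d0 \<noteq> 0 \<or> d1 \<noteq> 0 \<or> d2 \<noteq> 0")
    case True then show ?thesis using Qf_pos[OF assms True] by simp
  next
    case False then show ?thesis by (simp add: Qf_def)
  qed
  then show "FT a0 a1 a2 d0 d1 d2 d0 d1 d2 \<le> 0"
    unfolding FT_eq[OF assms] ff_Q[OF assms] using D \<open>Qf a0 a1 a2 d0 d1 d2 \<ge> 0\<close>
    by (intro divide_nonpos_pos) auto
  show "FT a0 a1 a2 d0 d1 d2 d0 d1 d2 < 0" if "d0 \<noteq> 0 \<or> d1 \<noteq> 0 \<or> d2 \<noteq> 0"
    unfolding FT_eq[OF assms] ff_Q[OF assms] using D Qf_pos[OF assms that]
    by (intro divide_neg_pos) auto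
qed

lemma FT_scale:
  "FT a0 a1 a2 (t*d0) (t*d1) (t*d2) h0 h1 h2 = t * FT a0 a1 a2 d0 d1 d2 h0 h1 h2"
  unfolding FT_def Tder_def by (simp add: field_simps)

lemma FT_add2:
  "FT a0 a1 a2 d0 d1 d2 (h0+s*g0) (h1+s*g1) (h2+s*g2) = FT a0 a1 a2 d0 d1 d2 h0 h1 h2 + s * FT a0 a1 a2 d0 d1 d2 g0 g1 g2"
  unfolding FT_def by (simp add: algebra_simps)

lemma cont_Th:
  fixes A B C :: "'a::topological_space \<Rightarrow> real"
  assumes "continuous_on S A" "continuous_on S B" "continuous_on S C"
    and "\<And>x. x \<in> S \<Longrightarrow> A x > 1" "\<And>x. x \<in> S \<Longrightarrow> B x > 1" "\<And>x. x \<in> S \<Longrightarrow> C x > 1"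
  shows "continuous_on S (\<lambda>x. Th (A x) (B x) (C x))"
  unfolding Th_def
proof (rule continuous_on_compose2[OF continuous_on_arcosh[OF order.refl]])
  have nz: "sqrt ((B x)^2 - 1) * sqrt ((C x)^2 - 1) \<noteq> 0" if "x \<in> S" for x
  proof -
    have "(B x)^2 > 1" "(C x)^2 > 1" using assms(5,6)[OF that] by (auto intro: one_less_power)
    then show ?thesis by simp
  qed
  show "continuous_on S (\<lambda>x. (A x + B x * C x) / (sqrt ((B x)\<^sup>2 - 1) * sqrt ((C x)\<^sup>2 - 1)))"
    using assms(1-3) nz by (intro continuous_intros) auto
  show "(\<lambda>x. (A x + B x * C x) / (sqrt ((B x)\<^sup>2 - 1) * sqrt ((C x)\<^sup>2 - 1))) ` S \<subseteq> {1..}"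
    using Th_arg_gt1[OF assms(4,5,6)] by (auto simp: less_imp_le)
qed

lemma cont_Tder:
  fixes A B C dA dB dC :: "'a::topological_space \<Rightarrow> real"
  assumes "continuous_on S A" "continuous_on S B" "continuous_on S C"
    "continuous_on S dA" "continuous_on S dB" "continuous_on S dC"
    and "\<And>x. x \<in> S \<Longrightarrow> A x > 1" "\<And>x. x \<in> S \<Longrightarrow> B x > 1" "\<And>x. x \<in> S \<Longrightarrow> C x > 1"
  shows "continuous_on S (\<lambda>x. Tder (A x) (B x) (C x) (dA x) (dB x) (dC x))"
  unfolding Tder_def
proof -
  have nz: "(B x)^2 - 1 \<noteq> 0" "(C x)^2 - 1 \<noteq> 0" "sqrt (Dl (A x) (B x) (C x)) \<noteq> 0" if "x \<in> S" for x
  proof -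
    have "(B x)^2 > 1" "(C x)^2 > 1" using assms(8,9)[OF that] by (auto intro: one_less_power)
    then show "(B x)^2 - 1 \<noteq> 0" "(C x)^2 - 1 \<noteq> 0" by auto
    show "sqrt (Dl (A x) (B x) (C x)) \<noteq> 0" using Dl_pos[OF assms(7-9)[OF that]] by simp
  qed
  show "continuous_on S (\<lambda>x. (dA x - (C x + A x * B x) / ((B x)\<^sup>2 - 1) * dB x - (B x + A x * C x) / ((C x)\<^sup>2 - 1) * dC x) /
        sqrt (Dl (A x) (B x) (C x)))"
    using assms(1-6) nz unfolding Dl_def by (intro continuous_intros) auto
qed

locale tri =
  fixes E :: "'e set" and F :: "'f set" and ea eb :: "'e \<Rightarrow> 'v::finite"
    and side :: "'f \<Rightarrow> nat \<Rightarrow> 'e" and corner :: "'f \<Rightarrow> nat \<Rightarrow> 'v" and l0 :: "'e \<Rightarrow> real"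
  assumes tri: "ideal_triangulation E F ea eb side corner"
begin

definition Xv :: "real^'v \<Rightarrow> 'e \<Rightarrow> real" where
  "Xv w e = exp (w$ea e + w$eb e) * cosh (l0 e/2)"
definition Cv :: "real^'v \<Rightarrow> 'e \<Rightarrow> real" where
  "Cv w e = 2*(Xv w e)^2 - 1"

lemma finF: "finite F" using tri unfolding ideal_triangulation_def by auto

lemma side_E: "f \<in> F \<Longrightarrow> k < 3 \<Longrightarrow> side f k \<in> E"
  using tri unfolding ideal_triangulation_def by auto

lemma side_ends:
  assumes "f \<in> F" "k < 3"
  shows "(d::real^'v)$ea (side f k) + d$eb (side f k) = d$corner f ((k+1) mod 3) + d$corner f ((k+2) mod 3)"
proof -
  have "{ea (side f k), eb (side f k)} = {corner f ((k + 1) mod 3), corner f ((k + 2) mod 3)}"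
    using tri assms unfolding ideal_triangulation_def by auto
  then show ?thesis by (auto simp: doubleton_eq_iff)
qed

lemma vert_cov: "\<exists>f\<in>F. \<exists>k<3. corner f k = i"
  using tri unfolding ideal_triangulation_def by auto

lemma X_gt1:
  assumes "w \<in> Wdom E ea eb l0" "e \<in> E"
  shows "Xv w e > 1"
proof -
  have c: "cosh (l0 e/2) > 0" by simp
  have "w$ea e + w$eb e > - ln (cosh (l0 e / 2))" using assms unfolding Wdom_def by auto
  then have "exp (w$ea e + w$eb e) > exp (- ln (cosh (l0 e / 2)))" by simp
  also have "exp (- ln (cosh (l0 e / 2))) = 1 / cosh (l0 e/2)" using c by (simp add: exp_minus inverse_eq_divide)
  finally show ?thesis using c unfolding Xv_def by (simp add: field_simps)
qed

lemma C_gt1: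
  assumes "w \<in> Wdom E ea eb l0" "e \<in> E"
  shows "Cv w e > 1"
proof -
  have "Xv w e > 1" by (rule X_gt1[OF assms])
  then have "(Xv w e)^2 > 1" by (simp add: one_less_power)
  then show ?thesis unfolding Cv_def by simp
qed

lemma el_eq: "edge_len ea eb l0 w e = 2 * arcosh (Xv w e)"
  by (simp add: edge_len_def Xv_def)

lemma cosh_el: "Xv w e \<ge> 1 \<Longrightarrow> cosh (edge_len ea eb l0 w e) = Cv w e"
  unfolding el_eq Cv_def cosh_double_cosh by simp

lemma sinh_el:
  assumes "Xv w e \<ge> 1"
  shows "sinh (edge_len ea eb l0 w e) = sqrt ((Cv w e)^2 - 1)"
proof -
  let ?X = "Xv w e"
  have "sinh (edge_len ea eb l0 w e) = 2 * sqrt (?X^2 - 1) * ?X"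
    unfolding el_eq sinh_double using assms by (simp add: sinh_arcosh_real)
  also have "\<dots> = sqrt ((2*?X)^2 * (?X^2 - 1))"
    using assms by (simp add: real_sqrt_mult)
  also have "(2*?X)^2 * (?X^2 - 1) = (Cv w e)^2 - 1"
    unfolding Cv_def by (simp add: power2_eq_square algebra_simps)
  finally show ?thesis .
qed

lemma theta_Th:
  assumes "Xv w (side f k) \<ge> 1" "Xv w (side f ((k+1) mod 3)) \<ge> 1" "Xv w (side f ((k+2) mod 3)) \<ge> 1"
  shows "theta ea eb l0 side w f k =
     Th (Cv w (side f k)) (Cv w (side f ((k+1) mod 3))) (Cv w (side f ((k+2) mod 3)))"
  unfolding theta_def Let_def Th_def cosh_el[OF assms(1)] cosh_el[OF assms(2)] cosh_el[OF assms(3)]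
    sinh_el[OF assms(2)] sinh_el[OF assms(3)] ..

lemma Cv_deriv:
  "((\<lambda>r. Cv (a + r *\<^sub>R d) e) has_real_derivative 2*(Cv (a + r *\<^sub>R d) e + 1)*(d$ea e + d$eb e)) (at r)"
proof -
  have eq: "(\<lambda>r. Cv (a + r *\<^sub>R d) e) = (\<lambda>r. 2*(exp ((a$ea e + a$eb e) + r*(d$ea e + d$eb e)) * cosh (l0 e/2))^2 - 1)"
    by (rule ext) (simp add: Cv_def Xv_def algebra_simps)
  show ?thesis unfolding eq
    by (auto intro!: derivative_eq_intros simp: Cv_def Xv_def power2_eq_square algebra_simps)
qed

lemma open_good: "open {r::real. 1 < Xv (a + r *\<^sub>R d) e}"
proof -
  have "continuous_on UNIV (\<lambda>r::real. Xv (a + r *\<^sub>R d) e)"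
    unfolding Xv_def by (intro continuous_intros)
  then show ?thesis by (intro open_Collect_less continuous_intros) auto
qed

lemma theta_deriv:
  assumes "f \<in> F" "k < 3" "a + r *\<^sub>R d \<in> Wdom E ea eb l0"
  shows "((\<lambda>r. theta ea eb l0 side (a + r *\<^sub>R d) f k) has_real_derivative
     Tder (Cv (a + r *\<^sub>R d) (side f k)) (Cv (a + r *\<^sub>R d) (side f ((k+1) mod 3)))
          (Cv (a + r *\<^sub>R d) (side f ((k+2) mod 3)))
          (2*(Cv (a + r *\<^sub>R d) (side f k) + 1)*(d$ea (side f k) + d$eb (side f k)))
          (2*(Cv (a + r *\<^sub>R d) (side f ((k+1) mod 3)) + 1)*(d$ea (side f ((k+1) mod 3)) + d$eb (side f ((k+1) mod 3))))
          (2*(Cv (a + r *\<^sub>R d) (side f ((k+2) mod 3)) + 1)*(d$ea (side f ((k+2) mod 3)) + d$eb (side f ((k+2) mod 3))))) (at r)"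
proof -
  have E: "side f k \<in> E" "side f ((k+1) mod 3) \<in> E" "side f ((k+2) mod 3) \<in> E"
    using side_E[OF assms(1)] assms(2) by auto
  define S where "S = {r::real. 1 < Xv (a + r *\<^sub>R d) (side f k)} \<inter> {r. 1 < Xv (a + r *\<^sub>R d) (side f ((k+1) mod 3))}
     \<inter> {r. 1 < Xv (a + r *\<^sub>R d) (side f ((k+2) mod 3))}"
  have oS: "open S" unfolding S_def by (intro open_Int open_good)
  have rS: "r \<in> S" unfolding S_def using X_gt1[OF assms(3)] E by auto
  have D: "((\<lambda>r. Th (Cv (a + r *\<^sub>R d) (side f k)) (Cv (a + r *\<^sub>R d) (side f ((k+1) mod 3)))
          (Cv (a + r *\<^sub>R d) (side f ((k+2) mod 3)))) has_real_derivative
     Tder (Cv (a + r *\<^sub>R d) (side f k)) (Cv (a + r *\<^sub>R d) (side f ((k+1) mod 3)))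
          (Cv (a + r *\<^sub>R d) (side f ((k+2) mod 3)))
          (2*(Cv (a + r *\<^sub>R d) (side f k) + 1)*(d$ea (side f k) + d$eb (side f k)))
          (2*(Cv (a + r *\<^sub>R d) (side f ((k+1) mod 3)) + 1)*(d$ea (side f ((k+1) mod 3)) + d$eb (side f ((k+1) mod 3))))
          (2*(Cv (a + r *\<^sub>R d) (side f ((k+2) mod 3)) + 1)*(d$ea (side f ((k+2) mod 3)) + d$eb (side f ((k+2) mod 3))))) (at r)"
    by (rule Th_deriv[OF Cv_deriv Cv_deriv Cv_deriv]) (use C_gt1[OF assms(3)] E in auto)
  show ?thesis
  proof (rule has_field_derivative_transform_within_open[OF D oS rS])
    fix x assume "x \<in> S"
    then show "Th (Cv (a + x *\<^sub>R d) (side f k)) (Cv (a + x *\<^sub>R d) (side f ((k+1) mod 3)))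
          (Cv (a + x *\<^sub>R d) (side f ((k+2) mod 3))) = theta ea eb l0 side (a + x *\<^sub>R d) f k"
      unfolding S_def by (subst theta_Th) auto
  qed
qed

definition FTf :: "real^'v \<Rightarrow> real^'v \<Rightarrow> real^'v \<Rightarrow> 'f \<Rightarrow> real" where
  "FTf w d h f = FT (Cv w (side f 0)) (Cv w (side f 1)) (Cv w (side f 2))
      (d$corner f 0) (d$corner f 1) (d$corner f 2) (h$corner f 0) (h$corner f 1) (h$corner f 2)"
definition Hf :: "real^'v \<Rightarrow> real^'v \<Rightarrow> real^'v \<Rightarrow> real" where
  "Hf w d h = (\<Sum>f\<in>F. FTf w d h f)"
definition Sf :: "real^'v \<Rightarrow> real^'v \<Rightarrow> real" where
  "Sf w h = (\<Sum>f\<in>F. \<Sum>k<3. theta ea eb l0 side w f k * h$corner f k)"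

lemma sum3: "(\<Sum>k<(3::nat). g k) = g 0 + g 1 + (g 2 :: real)"
  by (simp add: numeral_3_eq_3 lessThan_Suc eval_nat_numeral)

lemma face_deriv:
  assumes f: "f \<in> F" and W: "a + r *\<^sub>R d \<in> Wdom E ea eb l0"
  shows "((\<lambda>r. \<Sum>k<3. theta ea eb l0 side (a + r *\<^sub>R d) f k * (h + r *\<^sub>R g)$corner f k) has_real_derivative
     FTf (a + r *\<^sub>R d) d (h + r *\<^sub>R g) f + (\<Sum>k<3. theta ea eb l0 side (a + r *\<^sub>R d) f k * g$corner f k)) (at r)"
proof -
  let ?w = "a + r *\<^sub>R d"
  have lin: "((\<lambda>r. (h + r *\<^sub>R g)$i) has_real_derivative g$i) (at r)" for i
    by (auto intro!: derivative_eq_intros)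
  have "((\<lambda>r. \<Sum>k<3. theta ea eb l0 side (a + r *\<^sub>R d) f k * (h + r *\<^sub>R g)$corner f k) has_real_derivative
     (\<Sum>k<3. Tder (Cv ?w (side f k)) (Cv ?w (side f ((k+1) mod 3)))
          (Cv ?w (side f ((k+2) mod 3)))
          (2*(Cv ?w (side f k) + 1)*(d$ea (side f k) + d$eb (side f k)))
          (2*(Cv ?w (side f ((k+1) mod 3)) + 1)*(d$ea (side f ((k+1) mod 3)) + d$eb (side f ((k+1) mod 3))))
          (2*(Cv ?w (side f ((k+2) mod 3)) + 1)*(d$ea (side f ((k+2) mod 3)) + d$eb (side f ((k+2) mod 3))))
        * (h + r *\<^sub>R g)$corner f k + theta ea eb l0 side ?w f k * g$corner f k)) (at r)"
  proof (intro DERIV_sum)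
    fix k :: nat assume "k \<in> {..<3}"
    then have k: "k < 3" by simp
    show "((\<lambda>r. theta ea eb l0 side (a + r *\<^sub>R d) f k * (h + r *\<^sub>R g)$corner f k) has_real_derivative
     Tder (Cv ?w (side f k)) (Cv ?w (side f ((k+1) mod 3)))
          (Cv ?w (side f ((k+2) mod 3)))
          (2*(Cv ?w (side f k) + 1)*(d$ea (side f k) + d$eb (side f k)))
          (2*(Cv ?w (side f ((k+1) mod 3)) + 1)*(d$ea (side f ((k+1) mod 3)) + d$eb (side f ((k+1) mod 3))))
          (2*(Cv ?w (side f ((k+2) mod 3)) + 1)*(d$ea (side f ((k+2) mod 3)) + d$eb (side f ((k+2) mod 3))))
        * (h + r *\<^sub>R g)$corner f k + theta ea eb l0 side ?w f k * g$corner f k) (at r)"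
      using DERIV_mult[OF theta_deriv[OF f k W] lin[of "corner f k"]]
      by (simp only: mult.commute[of "g $ corner f k"])
  qed
  moreover have "(\<Sum>k<3. Tder (Cv ?w (side f k)) (Cv ?w (side f ((k+1) mod 3)))
          (Cv ?w (side f ((k+2) mod 3)))
          (2*(Cv ?w (side f k) + 1)*(d$ea (side f k) + d$eb (side f k)))
          (2*(Cv ?w (side f ((k+1) mod 3)) + 1)*(d$ea (side f ((k+1) mod 3)) + d$eb (side f ((k+1) mod 3))))
          (2*(Cv ?w (side f ((k+2) mod 3)) + 1)*(d$ea (side f ((k+2) mod 3)) + d$eb (side f ((k+2) mod 3))))
        * (h + r *\<^sub>R g)$corner f k + theta ea eb l0 side ?w f k * g$corner f k)
     = FTf ?w d (h + r *\<^sub>R g) f + (\<Sum>k<3. theta ea eb l0 side ?w f k * g$corner f k)"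
  proof -
    have m: "((0::nat)+1) mod 3 = 1" "((0::nat)+2) mod 3 = 2" "((1::nat)+1) mod 3 = 2" "((1::nat)+2) mod 3 = 0"
      "((2::nat)+1) mod 3 = 0" "((2::nat)+2) mod 3 = 1" "(1::nat) mod 3 = 1" "(2::nat) mod 3 = 2" by simp_all
    have d0: "d$ea (side f 0) + d$eb (side f 0) = d$corner f 1 + d$corner f 2"
      using side_ends[OF f, of 0 d] unfolding m by simp
    have d1: "d$ea (side f 1) + d$eb (side f 1) = d$corner f 2 + d$corner f 0"
      using side_ends[OF f, of 1 d] unfolding m by simp
    have d2: "d$ea (side f 2) + d$eb (side f 2) = d$corner f 0 + d$corner f 1"
      using side_ends[OF f, of 2 d] unfolding m by simp
    show ?thesis
      unfolding sum3 m d0 d1 d2 FTf_def FT_def add_0 by linarith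
  qed
  ultimately show ?thesis by simp
qed

lemma Sf_deriv:
  assumes W: "a + r *\<^sub>R d \<in> Wdom E ea eb l0"
  shows "((\<lambda>r. Sf (a + r *\<^sub>R d) (h + r *\<^sub>R g)) has_real_derivative
     Hf (a + r *\<^sub>R d) d (h + r *\<^sub>R g) + Sf (a + r *\<^sub>R d) g) (at r)"
  unfolding Sf_def Hf_def sum.distrib[symmetric]
  by (intro DERIV_sum face_deriv W)

lemma face_C:
  assumes "w \<in> Wdom E ea eb l0" "f \<in> F"
  shows "Cv w (side f 0) > 1" "Cv w (side f 1) > 1" "Cv w (side f 2) > 1"
  using C_gt1[OF assms(1) side_E[OF assms(2)]] by auto

lemma Hf_sym:
  assumes "w \<in> Wdom E ea eb l0"
  shows "Hf w d h = Hf w h d"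
  unfolding Hf_def FTf_def
  by (rule sum.cong[OF refl], rule FT_sym[OF face_C[OF assms]])

lemma Hf_scale: "Hf w (t *\<^sub>R d) h = t * Hf w d h"
  unfolding Hf_def FTf_def sum_distrib_left by (simp add: FT_scale)

lemma Hf_add2: "Hf w d (h + s *\<^sub>R g) = Hf w d h + s * Hf w d g"
  unfolding Hf_def FTf_def sum_distrib_left sum.distrib[symmetric] by (simp add: FT_add2)

lemma Hf_neg:
  assumes W: "w \<in> Wdom E ea eb l0" and d: "d \<noteq> 0"
  shows "Hf w d d < 0"
proof -
  obtain i where i: "d$i \<noteq> 0" using d by (metis vec_eq_iff zero_index)
  obtain f0 k where f0: "f0 \<in> F" "k < 3" "corner f0 k = i" using vert_cov[of i] by blast
  have nz: "d$corner f0 0 \<noteq> 0 \<or> d$corner f0 1 \<noteq> 0 \<or> d$corner f0 2 \<noteq> 0"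
  proof -
    have "k = 0 \<or> k = 1 \<or> k = 2" using f0(2) by auto
    then show ?thesis using i f0(3) by auto
  qed
  have neg0: "FTf w d d f0 < 0" unfolding FTf_def by (rule FT_neg(2)[OF face_C[OF W f0(1)] nz])
  have rest: "(\<Sum>f\<in>F - {f0}. FTf w d d f) \<le> 0"
  proof (rule sum_nonpos)
    fix f assume "f \<in> F - {f0}"
    then have f: "f \<in> F" by simp
    show "FTf w d d f \<le> 0" unfolding FTf_def by (rule FT_neg(1)[OF face_C[OF W f]])
  qed
  have "Hf w d d = FTf w d d f0 + (\<Sum>f\<in>F - {f0}. FTf w d d f)"
    unfolding Hf_def using finF f0(1) by (simp add: sum.remove)
  then show ?thesis using neg0 rest by linarith
qed

lemma sum_B: "(\<Sum>i\<in>UNIV. Bsum F ea eb l0 side corner i w * h$i) = Sf w h"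
proof -
  have "(\<Sum>i\<in>UNIV. Bsum F ea eb l0 side corner i w * h$i)
      = (\<Sum>i\<in>UNIV. \<Sum>f\<in>F. \<Sum>k\<in>{k. k < 3 \<and> corner f k = i}. theta ea eb l0 side w f k * h$corner f k)"
    unfolding Bsum_def sum_distrib_right by (intro sum.cong refl) auto
  also have "\<dots> = (\<Sum>f\<in>F. \<Sum>i\<in>UNIV. \<Sum>k\<in>{k. k < 3 \<and> corner f k = i}. theta ea eb l0 side w f k * h$corner f k)"
    by (rule sum.swap)
  also have "\<dots> = Sf w h"
    unfolding Sf_def
  proof (intro sum.cong refl)
    fix f
    show "(\<Sum>i\<in>UNIV. \<Sum>k\<in>{k. k < 3 \<and> corner f k = i}. theta ea eb l0 side w f k * h$corner f k)
       = (\<Sum>k<3. theta ea eb l0 side w f k * h$corner f k)"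
      using sum.group[of "{..<3::nat}" UNIV "corner f" "\<lambda>k. theta ea eb l0 side w f k * h$corner f k"]
      by simp
  qed
  finally show ?thesis .
qed

lemma cont_Cv: "continuous_on S z \<Longrightarrow> continuous_on S (\<lambda>x. Cv (z x) e)"
  unfolding Cv_def Xv_def by (intro continuous_intros)

lemma cont_theta:
  assumes z: "continuous_on S z" "z ` S \<subseteq> Wdom E ea eb l0" and f: "f \<in> F" "k < 3"
  shows "continuous_on S (\<lambda>x. theta ea eb l0 side (z x) f k)"
proof -
  have E: "side f k \<in> E" "side f ((k+1) mod 3) \<in> E" "side f ((k+2) mod 3) \<in> E"
    using side_E[OF f(1)] f(2) by auto
  have "continuous_on S (\<lambda>x. Th (Cv (z x) (side f k)) (Cv (z x) (side f ((k+1) mod 3))) (Cv (z x) (side f ((k+2) mod 3))))"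
    using z E by (intro cont_Th cont_Cv C_gt1) auto
  moreover have "Th (Cv (z x) (side f k)) (Cv (z x) (side f ((k+1) mod 3))) (Cv (z x) (side f ((k+2) mod 3))) = theta ea eb l0 side (z x) f k"
    if "x \<in> S" for x
    using z that E X_gt1[of "z x"] by (intro theta_Th[symmetric]) (auto simp: less_imp_le)
  ultimately show ?thesis by (rule continuous_on_eq) simp
qed

lemma cont_Sf:
  assumes z: "continuous_on S z" "z ` S \<subseteq> Wdom E ea eb l0" and h: "continuous_on S hh"
  shows "continuous_on S (\<lambda>x. Sf (z x) (hh x))"
  unfolding Sf_def using z h by (intro continuous_intros cont_theta) auto

lemma cont_Hf:
  assumes z: "continuous_on S z" "z ` S \<subseteq> Wdom E ea eb l0" and d: "continuous_on S dd" and h: "continuous_on S hh"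
  shows "continuous_on S (\<lambda>x. Hf (z x) (dd x) (hh x))"
proof -
  have C0: "Cv (z x) (side f 0) > 1" and C1: "Cv (z x) (side f 1) > 1" and C2: "Cv (z x) (side f 2) > 1"
    if "f \<in> F" "x \<in> S" for f x
    using face_C[of "z x" f] z(2) that by auto
  show ?thesis unfolding Hf_def FTf_def FT_def
    by (intro continuous_on_sum continuous_intros cont_Tder cont_Cv z d h) (blast intro: C0 C1 C2)+
qed

lemma seg:
  assumes "x \<in> Wdom E ea eb l0" "y \<in> Wdom E ea eb l0" "0 \<le> t" "t \<le> 1"
  shows "x + t *\<^sub>R (y - x) \<in> Wdom E ea eb l0"
  unfolding Wdom_def
proof safe
  fix e assume e: "e \<in> E"
  let ?L = "- ln (cosh (l0 e / 2))"
  have hx: "x$ea e + x$eb e > ?L" and hy: "y$ea e + y$eb e > ?L" using assms(1,2) e unfolding Wdom_def by auto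
  have "(x + t *\<^sub>R (y - x))$ea e + (x + t *\<^sub>R (y - x))$eb e = (1-t)*(x$ea e + x$eb e) + t*(y$ea e + y$eb e)"
    by (simp add: algebra_simps)
  also have "\<dots> > (1-t)*?L + t*?L"
  proof (cases "t = 1")
    case True then show ?thesis using hy by simp
  next
    case False
    then have "1 - t > 0" using assms(4) by simp
    then have "(1-t)*(x$ea e + x$eb e) > (1-t)*?L" using hx by (intro mult_strict_left_mono)
    moreover have "t*(y$ea e + y$eb e) \<ge> t*?L" using hy assms(3) by (intro mult_left_mono) auto
    ultimately show ?thesis by linarith
  qed
  finally show "?L < (x + t *\<^sub>R (y - x))$ea e + (x + t *\<^sub>R (y - x))$eb e" by (simp add: algebra_simps)
qed

lemma Sf_zero: "Sf w 0 = 0" unfolding Sf_def by simp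

lemma Sf_deriv0:
  assumes W: "a + r *\<^sub>R d \<in> Wdom E ea eb l0"
  shows "((\<lambda>r. Sf (a + r *\<^sub>R d) h) has_real_derivative Hf (a + r *\<^sub>R d) d h) (at r)"
  using Sf_deriv[OF W, of h 0] by (simp add: Sf_zero)

lemma Phi_eq: "Phi F ea eb l0 side corner w0 w = - integral {0..1} (\<lambda>t. Sf (w0 + t *\<^sub>R (w - w0)) (w - w0))"
  unfolding Phi_def sum_B[symmetric] by simp

lemma g_deriv:
  assumes w0: "w0 \<in> Wdom E ea eb l0" and x: "x \<in> Wdom E ea eb l0" and y: "y \<in> Wdom E ea eb l0"
    and s: "s \<in> {0..1}"
  shows "((\<lambda>s. Phi F ea eb l0 side corner w0 (x + s *\<^sub>R (y - x))) has_real_derivative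
            - Sf (x + s *\<^sub>R (y - x)) (y - x)) (at s within {0..1})"
proof -
  define v where "v = y - x"
  define p where "p s = x + s *\<^sub>R v" for s
  define G where "G s t = Sf (w0 + t *\<^sub>R (p s - w0)) (p s - w0)" for s t
  define fx where "fx s t = Hf (w0 + t *\<^sub>R (p s - w0)) (t *\<^sub>R v) (p s - w0) + Sf (w0 + t *\<^sub>R (p s - w0)) v" for s t
  have pW: "p s \<in> Wdom E ea eb l0" if "s \<in> {0..1}" for s
    unfolding p_def v_def using seg[OF x y] that by auto
  have zW: "w0 + t *\<^sub>R (p s - w0) \<in> Wdom E ea eb l0" if "s \<in> {0..1}" "t \<in> {0..1}" for s t
    using seg[OF w0 pW[OF that(1)]] that(2) by auto
  have Gd: "((\<lambda>s. G s t) has_real_derivative fx s t) (at s within {0..1})" if "s \<in> {0..1}" "t \<in> {0..1}" for s t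
  proof -
    have e1: "w0 + t *\<^sub>R (p r - w0) = (w0 + t *\<^sub>R (x - w0)) + r *\<^sub>R (t *\<^sub>R v)" for r
      unfolding p_def by (simp add: algebra_simps)
    have e2: "p r - w0 = (x - w0) + r *\<^sub>R v" for r
      unfolding p_def by (simp add: algebra_simps)
    have "((\<lambda>r. Sf ((w0 + t *\<^sub>R (x - w0)) + r *\<^sub>R (t *\<^sub>R v)) ((x - w0) + r *\<^sub>R v)) has_real_derivative
        Hf ((w0 + t *\<^sub>R (x - w0)) + s *\<^sub>R (t *\<^sub>R v)) (t *\<^sub>R v) ((x - w0) + s *\<^sub>R v)
          + Sf ((w0 + t *\<^sub>R (x - w0)) + s *\<^sub>R (t *\<^sub>R v)) v) (at s)"
      by (rule Sf_deriv) (use zW[OF that] e1 in simp)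
    then show ?thesis unfolding G_def fx_def e1 unfolding e2 by (rule has_field_derivative_at_within)
  qed
  have Gi: "G s integrable_on cbox 0 1" if "s \<in> {0..1}" for s
    unfolding box_real G_def
    by (intro integrable_continuous_interval cont_Sf continuous_intros) (use zW[OF that] in auto)
  have Fc: "continuous_on ({0..1} \<times> cbox 0 1) (\<lambda>(s, t). fx s t)"
  proof -
    have "continuous_on ({0..1} \<times> {0..1}) (\<lambda>q. Hf (w0 + snd q *\<^sub>R (p (fst q) - w0)) (snd q *\<^sub>R v) (p (fst q) - w0)
          + Sf (w0 + snd q *\<^sub>R (p (fst q) - w0)) v)"
      unfolding p_def
      by (intro continuous_intros cont_Hf cont_Sf)
         (use zW in \<open>auto simp: p_def mem_Times_iff\<close>)
    then show ?thesis unfolding box_real fx_def split_beta .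
  qed
  have D: "((\<lambda>s. integral (cbox 0 1) (G s)) has_real_derivative integral (cbox 0 1) (fx s)) (at s within {0..1})"
    by (rule leibniz_rule_field_derivative[OF _ Gi Fc s]) (use Gd in \<open>auto simp: box_real\<close>)
  have I: "integral {0..1} (fx s) = Sf (p s) v"
  proof -
    define K where "K t = t * Sf (w0 + t *\<^sub>R (p s - w0)) v" for t
    have Kd: "(K has_vector_derivative fx s t) (at t within {0..1})" if t: "t \<in> {0..1}" for t
    proof -
      have "((\<lambda>t. Sf (w0 + t *\<^sub>R (p s - w0)) v) has_real_derivative Hf (w0 + t *\<^sub>R (p s - w0)) (p s - w0) v) (at t)"
        by (rule Sf_deriv0) (rule zW[OF s t])
      then have "(K has_real_derivative (1 * Sf (w0 + t *\<^sub>R (p s - w0)) v + Hf (w0 + t *\<^sub>R (p s - w0)) (p s - w0) v * t)) (at t)"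
        unfolding K_def by (rule DERIV_mult[OF DERIV_ident])
      moreover have "1 * Sf (w0 + t *\<^sub>R (p s - w0)) v + Hf (w0 + t *\<^sub>R (p s - w0)) (p s - w0) v * t = fx s t"
        unfolding fx_def Hf_scale Hf_sym[OF zW[OF s t], of "p s - w0" v] by simp
      ultimately show ?thesis
        by (simp add: has_real_derivative_iff_has_vector_derivative[symmetric] has_field_derivative_at_within)
    qed
    have "(fx s has_integral (K 1 - K 0)) {0..1}"
      by (rule fundamental_theorem_of_calculus) (use Kd in auto)
    then show ?thesis unfolding K_def by (simp add: integral_unique)
  qed
  have "((\<lambda>s. - integral {0..1} (G s)) has_real_derivative - Sf (p s) v) (at s within {0..1})"
    using DERIV_minus[OF D] unfolding box_real I .
  moreover have "Phi F ea eb l0 side corner w0 (x + s *\<^sub>R (y - x)) = - integral {0..1} (G s)" for s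
    unfolding Phi_eq G_def p_def v_def ..
  ultimately show ?thesis unfolding p_def v_def by simp
qed

lemma main:
  assumes w0: "w0 \<in> Wdom E ea eb l0"
  shows "strictly_convex_on (Wdom E ea eb l0) (Phi F ea eb l0 side corner w0)"
  unfolding strictly_convex_on_def
proof (intro ballI allI impI)
  fix x y and t :: real
  assume x: "x \<in> Wdom E ea eb l0" and y: "y \<in> Wdom E ea eb l0" and xy: "x \<noteq> y" and t0: "0 < t" and t1: "t < 1"
  define v where "v = y - x"
  define g where "g s = Phi F ea eb l0 side corner w0 (x + s *\<^sub>R v)" for s
  define gp where "gp s = - Sf (x + s *\<^sub>R v) v" for s
  have v0: "v \<noteq> 0" using xy unfolding v_def by simp
  have gd: "(g has_real_derivative gp s) (at s within {0..1})" if "s \<in> {0..1}" for s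
    unfolding g_def gp_def v_def by (rule g_deriv[OF w0 x y that])
  have gdi: "(g has_real_derivative gp s) (at s)" if "0 < s" "s < 1" for s
    using gd[of s] that by (simp add: at_within_Icc_at)
  have gc: "continuous_on {0..1} g" by (rule DERIV_continuous_on[OF gd])
  have pW: "x + s *\<^sub>R v \<in> Wdom E ea eb l0" if "s \<in> {0..1}" for s
    unfolding v_def using seg[OF x y] that by auto
  have gpd: "(gp has_real_derivative - Hf (x + s *\<^sub>R v) v v) (at s)" if "s \<in> {0..1}" for s
    unfolding gp_def by (intro DERIV_minus Sf_deriv0 pW that)
  have gpinc: "gp a < gp b" if "0 \<le> a" "a < b" "b \<le> 1" for a b
  proof (rule DERIV_pos_imp_increasing[OF that(2)])
    fix s assume "a \<le> s" "s \<le> b"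
    then have s: "s \<in> {0..1}" using that by auto
    show "\<exists>y. (gp has_real_derivative y) (at s) \<and> 0 < y"
      using gpd[OF s] Hf_neg[OF pW[OF s] v0] by auto
  qed
  have dif: "g differentiable (at s)" if "0 < s" "s < 1" for s
    unfolding real_differentiable_def using gdi[OF that] by blast
  obtain l1 z1 where z1: "0 < z1" "z1 < t" "(g has_real_derivative l1) (at z1)" "g t - g 0 = (t - 0) * l1"
    using MVT[OF t0 continuous_on_subset[OF gc] dif] t1 by auto
  obtain l2 z2 where z2: "t < z2" "z2 < 1" "(g has_real_derivative l2) (at z2)" "g 1 - g t = (1 - t) * l2"
    using MVT[OF t1 continuous_on_subset[OF gc] dif] t0 by auto
  have l1: "l1 = gp z1" using DERIV_unique[OF z1(3) gdi[of z1]] z1 t1 by auto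
  have l2: "l2 = gp z2" using DERIV_unique[OF z2(3) gdi[of z2]] z2 t0 by auto
  have "l1 < l2" unfolding l1 l2 using gpinc[of z1 z2] z1 z2 by auto
  then have pos: "t * (1 - t) * (l2 - l1) > 0" using t0 t1 by simp
  have "(1 - t) * g 0 + t * g 1 - g t = t * (1 - t) * (l2 - l1)"
  proof -
    have a: "g t = g 0 + t * l1" using z1(4) by simp
    have b: "g 1 = g 0 + t * l1 + (1 - t) * l2" using z2(4) a by simp
    show ?thesis unfolding a b by algebra
  qed
  moreover have "(1 - t) *\<^sub>R x + t *\<^sub>R y = x + t *\<^sub>R v" unfolding v_def by (simp add: algebra_simps)
  ultimately show "Phi F ea eb l0 side corner w0 ((1 - t) *\<^sub>R x + t *\<^sub>R y)
        < (1 - t) * Phi F ea eb l0 side corner w0 x + t * Phi F ea eb l0 side corner w0 y"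
    using pos unfolding g_def v_def by (simp add: algebra_simps)
qed

end

theorem lemma3p2:
  fixes E :: "'e set" and F :: "'f set"
    and ea eb :: "'e \<Rightarrow> 'v::finite"
    and side :: "'f \<Rightarrow> nat \<Rightarrow> 'e" and corner :: "'f \<Rightarrow> nat \<Rightarrow> 'v"
    and l0 :: "'e \<Rightarrow> real" and w0 :: "real^'v"
  assumes "ideal_triangulation E F ea eb side corner"
    and "\<forall>e\<in>E. l0 e > 0"
    and "w0 \<in> Wdom E ea eb l0"
  shows "strictly_convex_on (Wdom E ea eb l0) (Phi F ea eb l0 side corner w0)"
proof -
  interpret tri E F ea eb side corner l0 by unfold_locales (rule assms(1))
  show ?thesis by (rule main[OF assms(3)])
qed

end
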